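(* Let $w\in\mathfrak{S}_n$ be Bruhat irreducible and almost reducible at $(J,i)$. Then $J=\{s_1,\ldots,s_i\}$ or $J=\{s_i,\ldots,s_{n-1}\}$.
   Context: $\mathfrak{S}_n$ is the Coxeter group with $S=\{s_1,\ldots,s_{n-1}\}$, $s_i=(i\ i{+}1)$, length $\ell$. $\supp(x)$ is the set of simple generators in a reduced word for $x$; $D_L(x)=\{s\in S:\ell(sx)<\ell(x)\}$, $D_R(x)=\{s\in S:\ell(xs)<\ell(x)\}$. For $J\subseteq S$, $x=x^Jx_J$ is the parabolic decomposition with $x_J$ in the subgroup $W_J$ generated by $J$ and $x^J$ the minimal-length element of $xW_J$. It is a BP-decomposition if $\supp(x^J)\cap J\subseteq D_L(x_J)$. $w$ is Bruhat irreducible if $\supp(w)=S$ and $w$ cannot be written as $w=w'w''$ with $w',w''\neq e$ and $\supp(w')\cap\supp(w'')=\emptyset$. A Bruhat irreducible $w$ is almost reducible at $(J,i)$ if $w=w^Jw_J$ is a BP-decomposition with $\supp(w^J)\cap J=\{s_i\}$ and $s_i\notin D_L(w)$, $s_i\notin D_R(w)$. *)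

theory Defs
  imports "HOL-Combinatorics.Permutations"
begin

text \<open>Elements of the symmetric group S_n are permutations of {1..n}, i.e. functions
  w :: nat => nat with w permutes {1..n}.  Multiplication xy is composition x o y.
  A simple generator s_i (1 <= i <= n-1) is represented by its index i; S = {1..<n}.\<close>

definition sgen :: "nat \<Rightarrow> nat \<Rightarrow> nat" where
  "sgen i = (\<lambda>x. if x = i then Suc i else if x = Suc i then i else x)"

definition wprod :: "nat list \<Rightarrow> nat \<Rightarrow> nat" where
  "wprod ws = foldr (\<lambda>i acc. sgen i \<circ> acc) ws id"

definition sym_group :: "nat \<Rightarrow> (nat \<Rightarrow> nat) set" where
  "sym_group n = {w. w permutes {1..n}}"

definition is_word :: "nat \<Rightarrow> nat list \<Rightarrow> (nat \<Rightarrow> nat) \<Rightarrow> bool" where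
  "is_word n ws w \<longleftrightarrow> set ws \<subseteq> {1..<n} \<and> wprod ws = w"

definition clen :: "nat \<Rightarrow> (nat \<Rightarrow> nat) \<Rightarrow> nat" where
  "clen n w = (LEAST k. \<exists>ws. is_word n ws w \<and> length ws = k)"

definition reduced_word :: "nat \<Rightarrow> nat list \<Rightarrow> (nat \<Rightarrow> nat) \<Rightarrow> bool" where
  "reduced_word n ws w \<longleftrightarrow> is_word n ws w \<and> length ws = clen n w"

text \<open>Support: the set of generators occurring in a reduced word (independent of the choice).\<close>
definition supp :: "nat \<Rightarrow> (nat \<Rightarrow> nat) \<Rightarrow> nat set" where
  "supp n w = {i. \<exists>ws. reduced_word n ws w \<and> i \<in> set ws}"

definition DL :: "nat \<Rightarrow> (nat \<Rightarrow> nat) \<Rightarrow> nat set" where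
  "DL n x = {i \<in> {1..<n}. clen n (sgen i \<circ> x) < clen n x}"

definition DR :: "nat \<Rightarrow> (nat \<Rightarrow> nat) \<Rightarrow> nat set" where
  "DR n x = {i \<in> {1..<n}. clen n (x \<circ> sgen i) < clen n x}"

definition parab :: "nat set \<Rightarrow> (nat \<Rightarrow> nat) set" where
  "parab J = {wprod ws | ws. set ws \<subseteq> J}"

definition parabolic_decomp :: "nat \<Rightarrow> nat set \<Rightarrow> (nat \<Rightarrow> nat) \<Rightarrow> (nat \<Rightarrow> nat) \<Rightarrow> (nat \<Rightarrow> nat) \<Rightarrow> bool" where
  "parabolic_decomp n J x u v \<longleftrightarrow>
     x = u \<circ> v \<and> v \<in> parab J \<and>
     (\<forall>y \<in> parab J. clen n u \<le> clen n (x \<circ> y))"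

definition BP_decomp :: "nat \<Rightarrow> nat set \<Rightarrow> (nat \<Rightarrow> nat) \<Rightarrow> (nat \<Rightarrow> nat) \<Rightarrow> (nat \<Rightarrow> nat) \<Rightarrow> bool" where
  "BP_decomp n J x u v \<longleftrightarrow> parabolic_decomp n J x u v \<and> supp n u \<inter> J \<subseteq> DL n v"

definition bruhat_irreducible :: "nat \<Rightarrow> (nat \<Rightarrow> nat) \<Rightarrow> bool" where
  "bruhat_irreducible n w \<longleftrightarrow>
     supp n w = {1..<n} \<and>
     \<not> (\<exists>w' w''. w' \<in> sym_group n \<and> w'' \<in> sym_group n \<and> w' \<noteq> id \<and> w'' \<noteq> id \<and>
            w = w' \<circ> w'' \<and> supp n w' \<inter> supp n w'' = {})"

definition almost_reducible :: "nat \<Rightarrow> (nat \<Rightarrow> nat) \<Rightarrow> nat set \<Rightarrow> nat \<Rightarrow> bool" where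
  "almost_reducible n w J i \<longleftrightarrow>
     bruhat_irreducible n w \<and> J \<subseteq> {1..<n} \<and>
     (\<exists>u v. BP_decomp n J w u v \<and> supp n u \<inter> J = {i}) \<and>
     i \<notin> DL n w \<and> i \<notin> DR n w"

end

theory Submission
  imports Defs
begin

lemma sgen_transpose: "sgen i = transpose i (Suc i)"
  by (auto simp: sgen_def transpose_def fun_eq_iff)

lemma sgen_sgen: "sgen i \<circ> sgen i = id"
  by (auto simp: sgen_def fun_eq_iff)

lemma sgen_sgen_apply[simp]: "sgen i (sgen i p) = p"
  by (auto simp: sgen_def)

lemma sgen_permutes: "1 \<le> i \<Longrightarrow> i < n \<Longrightarrow> sgen i permutes {1..n}"
  unfolding sgen_transpose by (rule permutes_swap_id) auto

lemma wprod_Nil[simp]: "wprod [] = id"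
  by (simp add: wprod_def)

lemma wprod_Cons[simp]: "wprod (a # ws) = sgen a \<circ> wprod ws"
  by (simp add: wprod_def)

lemma wprod_append1: "wprod (ws @ [j]) = wprod ws \<circ> sgen j"
  by (induction ws) (auto simp: wprod_def)

lemma wprod_permutes: "set ws \<subseteq> {1..<n} \<Longrightarrow> wprod ws permutes {1..n}"
proof (induction ws)
  case Nil
  then show ?case by (metis permutes_id wprod_Nil)
next
  case (Cons a ws)
  then have "sgen a permutes {1..n}" by (intro sgen_permutes) auto
  with Cons show ?case by (metis permutes_compose wprod_Cons list.set_intros subset_code(1) set_subset_Cons)
qed

lemma wprod_rev: "wprod ws \<circ> wprod (rev ws) = id"
proof (induction ws)
  case Nil
  then show ?case by simp
next
  case (Cons a ws)
  have "wprod (a # ws) \<circ> wprod (rev (a # ws)) = sgen a \<circ> (wprod ws \<circ> wprod (rev ws)) \<circ> sgen a"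
    by (simp add: wprod_append1 comp_assoc)
  also have "\<dots> = id" unfolding Cons.IH by (simp add: sgen_sgen)
  finally show ?case .
qed

section \<open>Inversions\<close>

definition Inv :: "nat \<Rightarrow> (nat \<Rightarrow> nat) \<Rightarrow> (nat \<times> nat) set" where
  "Inv n x = {(p,q). 1 \<le> p \<and> p < q \<and> q \<le> n \<and> x q < x p}"

definition swp :: "nat \<Rightarrow> nat \<times> nat \<Rightarrow> nat \<times> nat" where
  "swp j = (\<lambda>(p,q). (sgen j p, sgen j q))"

lemma finite_Inv: "finite (Inv n x \<inter> T)"
proof -
  have "Inv n x \<subseteq> {1..n} \<times> {1..n}" by (auto simp: Inv_def)
  then show ?thesis by (meson finite_Int finite_SigmaI finite_atLeastAtMost finite_subset)
qed

lemma swp_swp[simp]: "swp j (swp j pq) = pq"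
  by (cases pq) (simp add: swp_def)

lemma inj_swp: "inj (swp j)"
  by (metis injI swp_swp)

lemma Inv_step_mem:
  assumes "1 \<le> j" "j < n" "(p,q) \<noteq> (j, Suc j)" "(p,q) \<noteq> (Suc j, j)"
  shows "(p,q) \<in> Inv n (x \<circ> sgen j) \<longleftrightarrow> swp j (p,q) \<in> Inv n x"
  using assms by (auto simp: Inv_def swp_def sgen_def split: if_splits)

lemma Inv_step_set:
  assumes "1 \<le> j" "j < n" "swp j ` T \<subseteq> T"
  shows "Inv n (x \<circ> sgen j) \<inter> T - {(j, Suc j)} = swp j ` (Inv n x \<inter> T - {(j, Suc j)})"
proof (rule set_eqI)
  fix pq :: "nat \<times> nat"
  obtain p q where pq: "pq = (p,q)" by force
  have T: "pq \<in> T \<longleftrightarrow> swp j pq \<in> T"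
    using assms(3) by (metis image_subset_iff swp_swp)
  show "pq \<in> Inv n (x \<circ> sgen j) \<inter> T - {(j, Suc j)} \<longleftrightarrow> pq \<in> swp j ` (Inv n x \<inter> T - {(j, Suc j)})"
  proof -
    have "pq \<in> swp j ` (Inv n x \<inter> T - {(j, Suc j)}) \<longleftrightarrow> swp j pq \<in> Inv n x \<inter> T - {(j, Suc j)}"
    proof
      assume "pq \<in> swp j ` (Inv n x \<inter> T - {(j, Suc j)})"
      then obtain r where "r \<in> Inv n x \<inter> T - {(j, Suc j)}" "pq = swp j r" by blast
      then show "swp j pq \<in> Inv n x \<inter> T - {(j, Suc j)}" by simp
    next
      assume "swp j pq \<in> Inv n x \<inter> T - {(j, Suc j)}"
      then show "pq \<in> swp j ` (Inv n x \<inter> T - {(j, Suc j)})"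
        using image_eqI[of pq "swp j" "swp j pq"] by simp
    qed
    moreover have "pq \<noteq> (Suc j, j) \<Longrightarrow> pq \<noteq> (j, Suc j) \<Longrightarrow> ?thesis"
    proof -
      assume a: "pq \<noteq> (Suc j, j)" "pq \<noteq> (j, Suc j)"
      then have "swp j pq \<noteq> (j, Suc j)" using pq by (auto simp: swp_def sgen_def split: if_splits)
      then show ?thesis using Inv_step_mem[OF assms(1,2)] T a pq calculation by auto
    qed
    moreover have "pq = (Suc j, j) \<Longrightarrow> ?thesis"
    proof -
      assume a: "pq = (Suc j, j)"
      then have "swp j pq = (j, Suc j)" by (simp add: swp_def sgen_def)
      then show ?thesis using calculation a by (auto simp: Inv_def)
    qed
    moreover have "pq = (j, Suc j) \<Longrightarrow> ?thesis"
    proof -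
      assume a: "pq = (j, Suc j)"
      then have "swp j pq = (Suc j, j)" by (simp add: swp_def sgen_def)
      then show ?thesis using calculation a by (auto simp: Inv_def)
    qed
    ultimately show ?thesis by blast
  qed
qed

lemma card_Inv_step:
  assumes "1 \<le> j" "j < n" "swp j ` T \<subseteq> T"
  shows "card (Inv n (x \<circ> sgen j) \<inter> T - {(j, Suc j)}) = card (Inv n x \<inter> T - {(j, Suc j)})"
  unfolding Inv_step_set[OF assms] by (rule card_image) (meson inj_swp inj_on_subset subset_UNIV)

definition ninv :: "nat \<Rightarrow> (nat \<Rightarrow> nat) \<Rightarrow> nat" where
  "ninv n x = card (Inv n x)"

lemma finite_Inv': "finite (Inv n x)"
  using finite_Inv[of n x UNIV] by simp

lemma mem_Inv_j: "1 \<le> j \<Longrightarrow> j < n \<Longrightarrow> (j, Suc j) \<in> Inv n y \<longleftrightarrow> y (Suc j) < y j"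
  by (auto simp: Inv_def)

lemma ninv_up:
  assumes "1 \<le> j" "j < n" "x j < x (Suc j)"
  shows "ninv n (x \<circ> sgen j) = Suc (ninv n x)"
proof -
  have c: "card (Inv n (x \<circ> sgen j) - {(j, Suc j)}) = card (Inv n x - {(j, Suc j)})"
    using card_Inv_step[OF assms(1,2), of UNIV x] by simp
  have "(j, Suc j) \<in> Inv n (x \<circ> sgen j)"
    using assms by (simp add: mem_Inv_j sgen_def)
  then have "card (Inv n (x \<circ> sgen j)) = Suc (card (Inv n (x \<circ> sgen j) - {(j, Suc j)}))"
    by (metis card_Suc_Diff1 finite_Inv')
  moreover have "(j, Suc j) \<notin> Inv n x" using assms by (simp add: mem_Inv_j)
  ultimately show ?thesis using c by (simp add: ninv_def)
qed

lemma ninv_down: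
  assumes "1 \<le> j" "j < n" "x (Suc j) < x j"
  shows "Suc (ninv n (x \<circ> sgen j)) = ninv n x"
proof -
  have c: "card (Inv n (x \<circ> sgen j) - {(j, Suc j)}) = card (Inv n x - {(j, Suc j)})"
    using card_Inv_step[OF assms(1,2), of UNIV x] by simp
  have "(j, Suc j) \<in> Inv n x"
    using assms by (simp add: mem_Inv_j)
  then have "card (Inv n x) = Suc (card (Inv n x - {(j, Suc j)}))"
    by (metis card_Suc_Diff1 finite_Inv')
  moreover have "(j, Suc j) \<notin> Inv n (x \<circ> sgen j)" using assms by (simp add: mem_Inv_j sgen_def)
  ultimately show ?thesis using c by (simp add: ninv_def)
qed

lemma perm_neq: "x permutes {1..n} \<Longrightarrow> x j \<noteq> x (Suc j)"
  by (metis n_not_Suc_n permutes_inj injD)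

lemma ninv_step_le:
  assumes "x permutes {1..n}" "1 \<le> j" "j < n"
  shows "ninv n (x \<circ> sgen j) \<le> Suc (ninv n x)"
proof (cases "x j < x (Suc j)")
  case True
  then show ?thesis using ninv_up[OF assms(2,3)] by simp
next
  case False
  then have "x (Suc j) < x j" using perm_neq[OF assms(1), of j] by simp
  then show ?thesis using ninv_down[OF assms(2,3)] by fastforce
qed

lemma ninv_word: "set ws \<subseteq> {1..<n} \<Longrightarrow> ninv n (wprod ws) \<le> length ws"
proof (induction ws rule: rev_induct)
  case Nil
  have "Inv n (\<lambda>a. a) = {}" by (auto simp: Inv_def)
  then show ?case by (simp add: ninv_def)
next
  case (snoc j ws)
  then have p: "wprod ws permutes {1..n}" by (intro wprod_permutes) auto
  have "ninv n (wprod (ws @ [j])) \<le> Suc (ninv n (wprod ws))"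
    unfolding wprod_append1 using snoc.prems by (intro ninv_step_le[OF p]) auto
  then show ?case using snoc by simp
qed

lemma ninv_id: "ninv n (\<lambda>a. a) = 0"
proof -
  have "Inv n (\<lambda>a. a) = {}" by (auto simp: Inv_def)
  then show ?thesis by (simp add: ninv_def)
qed

lemma mono_chain:
  assumes "\<And>j. p \<le> j \<Longrightarrow> j < q \<Longrightarrow> x j \<le> x (Suc j)" "p \<le> q"
  shows "x p \<le> (x q :: nat)"
  using assms
proof (induction q)
  case 0
  then show ?case by simp
next
  case (Suc q)
  show ?case
  proof (cases "p = Suc q")
    case True
    then show ?thesis by simp
  next
    case False
    then have "x p \<le> x q" using Suc by auto
    also have "x q \<le> x (Suc q)" using Suc False by auto
    finally show ?thesis .
  qed
qed

lemma descent:
  assumes "x permutes {1..n}" "Inv n x \<noteq> {}"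
  shows "\<exists>j. 1 \<le> j \<and> j < n \<and> x (Suc j) < x j"
proof (rule ccontr)
  assume a: "\<not> ?thesis"
  obtain p q where pq: "(p,q) \<in> Inv n x" using assms(2) by auto
  then have b: "1 \<le> p" "p < q" "q \<le> n" "x q < x p" by (auto simp: Inv_def)
  have h: "x j \<le> x (Suc j)" if "p \<le> j" "j < q" for j
  proof -
    have "1 \<le> j" "j < n" using b that by auto
    then show "x j \<le> x (Suc j)" using a by (meson not_less)
  qed
  have "x p \<le> x q" using mono_chain[of p q x, OF h] b by simp
  with b show False by simp
qed

lemma no_inv_id:
  assumes "x permutes {1..n}" "Inv n x = {}"
  shows "x = id"
proof
  fix p
  show "x p = id p"
  proof (cases "p \<in> {1..n}")
    case False
    then show ?thesis using permutes_not_in[OF assms(1)] by simp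
  next
    case True
    have inc: "x a < x b" if "a \<in> {1..n}" "b \<in> {1..n}" "a < b" for a b
    proof -
      have "(a,b) \<notin> Inv n x" using assms(2) by auto
      then have "x a \<le> x b" using that by (auto simp: Inv_def)
      moreover have "x a \<noteq> x b" using permutes_inj[OF assms(1)] that by (metis injD less_irrefl)
      ultimately show ?thesis by simp
    qed
    have in1: "x a \<in> {1..n}" if "a \<in> {1..n}" for a
      using permutes_in_image[OF assms(1)] that by simp
    have injx: "inj_on x A" for A using permutes_inj[OF assms(1)] by (meson inj_on_subset subset_UNIV)
    have "x ` {1..p} \<subseteq> {1..x p}"
    proof
      fix y assume "y \<in> x ` {1..p}"
      then obtain a where a: "a \<in> {1..p}" "y = x a" by auto
      then have "a \<in> {1..n}" using True by auto
      then have "x a \<le> x p" using inc[of a p] True a by (cases "a = p") auto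
      moreover have "1 \<le> x a" using in1 \<open>a \<in> {1..n}\<close> by auto
      ultimately show "y \<in> {1..x p}" using a by auto
    qed
    then have "card (x ` {1..p}) \<le> card {1..x p}" by (intro card_mono) auto
    then have le1: "p \<le> x p" using card_image[OF injx[of "{1..p}"]] by simp
    have "x ` {p..n} \<subseteq> {x p..n}"
    proof
      fix y assume "y \<in> x ` {p..n}"
      then obtain a where a: "a \<in> {p..n}" "y = x a" by auto
      then have "a \<in> {1..n}" using True by auto
      then have "x p \<le> x a" using inc[of p a] True a by (cases "a = p") auto
      moreover have "x a \<le> n" using in1 \<open>a \<in> {1..n}\<close> by auto
      ultimately show "y \<in> {x p..n}" using a by auto
    qed
    then have "card (x ` {p..n}) \<le> card {x p..n}" by (intro card_mono) auto
    then have le2: "x p \<le> p" using card_image[OF injx[of "{p..n}"]] True in1[OF True] by (simp; arith)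
    show ?thesis using le1 le2 by simp
  qed
qed

lemma word_exists:
  "x permutes {1..n} \<Longrightarrow> \<exists>ws. set ws \<subseteq> {1..<n} \<and> wprod ws = x \<and> length ws = ninv n x"
proof (induction "ninv n x" arbitrary: x)
  case 0
  then have "Inv n x = {}" using finite_Inv' by (simp add: ninv_def)
  then have "x = id" using no_inv_id 0 by blast
  then show ?case using ninv_id[of n] by (intro exI[of _ "[]"]) simp
next
  case (Suc k)
  then have "Inv n x \<noteq> {}" by (auto simp: ninv_def)
  then obtain j where j: "1 \<le> j" "j < n" "x (Suc j) < x j" using descent Suc.prems by blast
  have d: "Suc (ninv n (x \<circ> sgen j)) = ninv n x" using ninv_down[OF j] .
  have pp: "x \<circ> sgen j permutes {1..n}" using Suc.prems sgen_permutes[OF j(1,2)] by (rule permutes_compose[rotated])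
  obtain ws where ws: "set ws \<subseteq> {1..<n}" "wprod ws = x \<circ> sgen j" "length ws = ninv n (x \<circ> sgen j)"
    using Suc.hyps(1)[of "x \<circ> sgen j"] d Suc.hyps(2) pp by auto
  have "wprod (ws @ [j]) = x" using ws(2) by (simp add: wprod_append1 comp_assoc sgen_sgen)
  then show ?case using ws j d by (intro exI[of _ "ws @ [j]"]) auto
qed

lemma clen_eq:
  assumes "x permutes {1..n}"
  shows "clen n x = ninv n x"
  unfolding clen_def
proof (rule Least_equality)
  show "\<exists>ws. is_word n ws x \<and> length ws = ninv n x"
    using word_exists[OF assms] by (auto simp: is_word_def)
next
  fix k assume "\<exists>ws. is_word n ws x \<and> length ws = k"
  then obtain ws where "set ws \<subseteq> {1..<n}" "wprod ws = x" "length ws = k" by (auto simp: is_word_def)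
  then show "ninv n x \<le> k" using ninv_word by blast
qed

section \<open>Preservation of initial segments and support\<close>

definition presv :: "(nat \<Rightarrow> nat) \<Rightarrow> nat \<Rightarrow> bool" where
  "presv x m \<longleftrightarrow> x ` {1..m} = {1..m}"

lemma presv_le:
  assumes "x permutes {1..n}" "presv x m"
  shows "x p \<le> m \<longleftrightarrow> p \<le> m"
proof -
  have x0: "x 0 = 0" using permutes_not_in[OF assms(1)] by simp
  have inj: "inj x" using permutes_inj[OF assms(1)] .
  have img: "x ` {1..m} = {1..m}" using assms(2) by (simp add: presv_def)
  show ?thesis
  proof
    assume a: "x p \<le> m"
    show "p \<le> m"
    proof (cases "x p = 0")
      case True
      then have "p = 0" using x0 inj by (metis injD)
      then show ?thesis by simp
    next
      case False
      then have "x p \<in> x ` {1..m}" using a img by auto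
      then have "p \<in> {1..m}" using inj by (simp only: inj_image_mem_iff)
      then show ?thesis by simp
    qed
  next
    assume a: "p \<le> m"
    show "x p \<le> m"
    proof (cases "p = 0")
      case True
      then show ?thesis using x0 by simp
    next
      case False
      then have "x p \<in> x ` {1..m}" using a by auto
      then show ?thesis using img by auto
    qed
  qed
qed

lemma invol_image:
  assumes "\<And>p. p \<in> A \<Longrightarrow> f p \<in> A" "\<And>p. f (f p) = p"
  shows "f ` A = A"
proof
  show "f ` A \<subseteq> A" using assms(1) by auto
  show "A \<subseteq> f ` A"
  proof
    fix p assume "p \<in> A"
    then have "f p \<in> A" using assms(1) by auto
    then show "p \<in> f ` A" using assms(2)[of p] by (metis image_eqI)
  qed
qed

lemma sgen_presv: "1 \<le> j \<Longrightarrow> j \<noteq> m \<Longrightarrow> presv (sgen j) m"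
  unfolding presv_def by (rule invol_image) (auto simp: sgen_def)

lemma presv_comp: "presv x m \<Longrightarrow> presv y m \<Longrightarrow> presv (x \<circ> y) m"
  unfolding presv_def by (metis image_comp)

lemma presv_id[simp]: "presv id m" "presv (\<lambda>a. a) m"
  by (simp_all add: presv_def)

lemma presv_0[simp]: "presv x 0"
  by (simp add: presv_def)

lemma word_presv: "set ws \<subseteq> A \<Longrightarrow> (\<And>j. j \<in> A \<Longrightarrow> 1 \<le> j \<and> j \<noteq> m) \<Longrightarrow> presv (wprod ws) m"
  by (induction ws) (auto intro!: presv_comp sgen_presv)

lemma reduced_avoid:
  "set ws \<subseteq> {1..<n} \<Longrightarrow> ninv n (wprod ws) = length ws \<Longrightarrow>
   (\<forall>(p,q) \<in> Inv n (wprod ws). \<not> (wprod ws q \<le> m \<and> m < wprod ws p)) \<Longrightarrow>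
   m \<notin> set ws \<and> presv (wprod ws) m"
proof (induction ws rule: rev_induct)
  case Nil
  then show ?case by simp
next
  case (snoc j ws)
  define y where "y = wprod ws"
  have j: "1 \<le> j" "j < n" using snoc.prems(1) by auto
  have ws: "set ws \<subseteq> {1..<n}" using snoc.prems(1) by auto
  have py: "y permutes {1..n}" unfolding y_def using ws by (rule wprod_permutes)
  have y': "wprod (ws @ [j]) = y \<circ> sgen j" by (simp add: y_def wprod_append1)
  have le: "ninv n y \<le> length ws" unfolding y_def using ws by (rule ninv_word)
  have eq: "ninv n (y \<circ> sgen j) = Suc (length ws)" using snoc.prems(2)[unfolded y'] by (simp only: length_append_singleton)
  have inc: "y j < y (Suc j)"
  proof (rule ccontr)
    assume "\<not> ?thesis"
    then have "y (Suc j) < y j" using perm_neq[OF py, of j] by simp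
    from ninv_down[OF j this] eq le show False by simp
  qed
  have eqy: "ninv n y = length ws" using ninv_up[OF j inc] eq by simp
  have cr': "\<forall>(p,q) \<in> Inv n (y \<circ> sgen j). \<not> ((y \<circ> sgen j) q \<le> m \<and> m < (y \<circ> sgen j) p)"
    using snoc.prems(3)[unfolded y'] .
  have cr: "\<forall>(p,q) \<in> Inv n y. \<not> (y q \<le> m \<and> m < y p)"
  proof (intro ballI, clarify)
    fix p q assume pq: "(p,q) \<in> Inv n y" "y q \<le> m" "m < y p"
    have n1: "(p,q) \<noteq> (j, Suc j)" using pq(1) inc by (auto simp: Inv_def)
    have n2: "(p,q) \<noteq> (Suc j, j)" using pq(1) by (auto simp: Inv_def)
    obtain p' q' where pq': "swp j (p,q) = (p',q')" by force
    have "swp j (p',q') = (p,q)" using pq' by (metis swp_swp)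
    then have n1': "(p',q') \<noteq> (j, Suc j)" "(p',q') \<noteq> (Suc j, j)"
      using n1 n2 by (auto simp: swp_def sgen_def)
    have "(p',q') \<in> Inv n (y \<circ> sgen j)"
      using Inv_step_mem[OF j n1'] \<open>swp j (p',q') = (p,q)\<close> pq(1) by simp
    moreover have "sgen j p' = p" "sgen j q' = q" using \<open>swp j (p',q') = (p,q)\<close> by (auto simp: swp_def)
    ultimately show False using cr' pq by auto
  qed
  have IH: "m \<notin> set ws" "presv y m" using snoc.IH[OF ws _ ] eqy cr by (auto simp: y_def)
  have jm: "j \<noteq> m"
  proof
    assume "j = m"
    have "(j, Suc j) \<in> Inv n (y \<circ> sgen j)" using j inc by (simp add: mem_Inv_j sgen_def)
    then have "\<not> (y j \<le> m \<and> m < y (Suc j))" using cr' by (auto simp: sgen_def)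
    moreover have "y j \<le> m" using presv_le[OF py IH(2)] \<open>j = m\<close> by simp
    moreover have "\<not> y (Suc j) \<le> m" using presv_le[OF py IH(2)] \<open>j = m\<close> by simp
    ultimately show False by simp
  qed
  have "presv (y \<circ> sgen j) m" using IH(2) sgen_presv[OF j(1) jm] by (rule presv_comp)
  then have "presv (wprod (ws @ [j])) m" by (simp only: y')
  then show ?case using IH jm by simp
qed

lemma supp_char:
  assumes "x permutes {1..n}"
  shows "supp n x = {m \<in> {1..<n}. \<not> presv x m}"
proof (intro set_eqI iffI)
  fix m assume "m \<in> supp n x"
  then obtain ws where ws: "reduced_word n ws x" "m \<in> set ws" by (auto simp: supp_def)
  then have ws': "set ws \<subseteq> {1..<n}" "wprod ws = x" "length ws = ninv n x"
    using clen_eq[OF assms] by (auto simp: reduced_word_def is_word_def)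
  have "\<not> presv x m"
  proof
    assume pr: "presv x m"
    have "\<forall>(p,q) \<in> Inv n x. \<not> (x q \<le> m \<and> m < x p)"
    proof (clarify)
      fix p q assume "(p,q) \<in> Inv n x" "x q \<le> m" "m < x p"
      then have a0: "p < q" by (auto simp: Inv_def)
      have "q \<le> m" using presv_le[OF assms pr, of q] \<open>x q \<le> m\<close> by simp
      note a = a0 this
      have "\<not> p \<le> m" using presv_le[OF assms pr, of p] \<open>m < x p\<close> by simp
      then show False using a by simp
    qed
    then have "m \<notin> set ws" using reduced_avoid[OF ws'(1)] ws' by simp
    then show False using ws by simp
  qed
  then show "m \<in> {m \<in> {1..<n}. \<not> presv x m}" using ws ws' by auto
next
  fix m assume m: "m \<in> {m \<in> {1..<n}. \<not> presv x m}"
  obtain ws where ws: "set ws \<subseteq> {1..<n}" "wprod ws = x" "length ws = ninv n x"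
    using word_exists[OF assms] by blast
  then have red: "reduced_word n ws x" using clen_eq[OF assms] by (simp add: reduced_word_def is_word_def)
  have "m \<in> set ws"
  proof (rule ccontr)
    assume "m \<notin> set ws"
    then have "presv (wprod ws) m" using ws(1) by (intro word_presv[of ws "set ws"]) auto
    then show False using m ws by simp
  qed
  then show "m \<in> supp n x" using red by (auto simp: supp_def)
qed

section \<open>Cutting a permutation\<close>

definition cutL :: "nat \<Rightarrow> (nat \<Rightarrow> nat) \<Rightarrow> nat \<Rightarrow> nat" where
  "cutL m x = (\<lambda>p. if p \<le> m then x p else p)"

definition cutH :: "nat \<Rightarrow> (nat \<Rightarrow> nat) \<Rightarrow> nat \<Rightarrow> nat" where
  "cutH m x = (\<lambda>p. if p \<le> m then p else x p)"

lemma cut_decomp: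
  assumes "x permutes {1..n}" "presv x m"
  shows "x = cutL m x \<circ> cutH m x" "x = cutH m x \<circ> cutL m x"
proof -
  note le = presv_le[OF assms]
  show "x = cutL m x \<circ> cutH m x"
  proof
    fix p show "x p = (cutL m x \<circ> cutH m x) p"
      using le[of p] by (cases "p \<le> m") (auto simp: cutL_def cutH_def)
  qed
  show "x = cutH m x \<circ> cutL m x"
  proof
    fix p show "x p = (cutH m x \<circ> cutL m x) p"
      using le[of p] by (cases "p \<le> m") (auto simp: cutL_def cutH_def)
  qed
qed

lemma cut_perm:
  assumes "x permutes {1..n}" "presv x m"
  shows "cutL m x permutes {1..n}" "cutH m x permutes {1..n}"
proof -
  note le = presv_le[OF assms]
  have inj: "inj x" using permutes_inj[OF assms(1)] .
  have inx: "x p \<in> {1..n} \<longleftrightarrow> p \<in> {1..n}" for p using permutes_in_image[OF assms(1)] .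
  have out: "p \<notin> {1..n} \<Longrightarrow> x p = p" for p using permutes_not_in[OF assms(1)] .
  show "cutL m x permutes {1..n}"
  proof (rule inj_imp_permutes)
    show "inj_on (cutL m x) {1..n}"
    proof (rule inj_onI)
      fix a b assume "a \<in> {1..n}" "b \<in> {1..n}" "cutL m x a = cutL m x b"
      then show "a = b" using le[of a] le[of b] inj
        by (cases "a \<le> m"; cases "b \<le> m") (auto simp: cutL_def dest: injD)
    qed
    show "finite {1..n}" by simp
    show "cutL m x p \<in> {1..n}" if "p \<in> {1..n}" for p using that inx[of p] by (simp add: cutL_def)
    show "cutL m x p = p" if "p \<notin> {1..n}" for p using that out[of p] by (simp add: cutL_def)
  qed
  show "cutH m x permutes {1..n}"
  proof (rule inj_imp_permutes)
    show "inj_on (cutH m x) {1..n}"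
    proof (rule inj_onI)
      fix a b assume "a \<in> {1..n}" "b \<in> {1..n}" "cutH m x a = cutH m x b"
      then show "a = b" using le[of a] le[of b] inj
        by (cases "a \<le> m"; cases "b \<le> m") (auto simp: cutH_def dest: injD)
    qed
    show "finite {1..n}" by simp
    show "cutH m x p \<in> {1..n}" if "p \<in> {1..n}" for p using that inx[of p] by (simp add: cutH_def)
    show "cutH m x p = p" if "p \<notin> {1..n}" for p using that out[of p] by (simp add: cutH_def)
  qed
qed

lemma presv_cut:
  assumes "x permutes {1..n}" "presv x m"
  shows "k \<le> m \<Longrightarrow> presv (cutL m x) k \<longleftrightarrow> presv x k"
    and "k \<le> m \<Longrightarrow> presv (cutH m x) k"
    and "m \<le> k \<Longrightarrow> presv (cutL m x) k"
    and "m \<le> k \<Longrightarrow> presv (cutH m x) k \<longleftrightarrow> presv x k"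
proof -
  have img: "x ` {1..m} = {1..m}" using assms(2) by (simp add: presv_def)
  show "k \<le> m \<Longrightarrow> presv (cutL m x) k \<longleftrightarrow> presv x k"
  proof -
    assume k: "k \<le> m"
    have "cutL m x ` {1..k} = x ` {1..k}" using k by (intro image_cong) (auto simp: cutL_def)
    then show ?thesis by (simp add: presv_def)
  qed
  show "k \<le> m \<Longrightarrow> presv (cutH m x) k"
  proof -
    assume k: "k \<le> m"
    have "cutH m x ` {1..k} = (\<lambda>p. p) ` {1..k}" using k by (intro image_cong) (auto simp: cutH_def)
    then show ?thesis by (simp add: presv_def)
  qed
  assume k: "m \<le> k"
  have split: "{1..k} = {1..m} \<union> {Suc m..k}" using k by auto
  have "cutL m x ` {1..k} = x ` {1..m} \<union> (\<lambda>p. p) ` {Suc m..k}"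
    unfolding split image_Un by (intro arg_cong2[where f="(\<union>)"] image_cong) (auto simp: cutL_def)
  then show "presv (cutL m x) k" using img split by (simp add: presv_def)
  have "cutH m x ` {1..k} = (\<lambda>p. p) ` {1..m} \<union> x ` {Suc m..k}"
    unfolding split image_Un by (intro arg_cong2[where f="(\<union>)"] image_cong) (auto simp: cutH_def)
  moreover have "x ` {1..k} = {1..m} \<union> x ` {Suc m..k}"
    unfolding split image_Un img ..
  ultimately show "presv (cutH m x) k \<longleftrightarrow> presv x k" by (simp add: presv_def)
qed

section \<open>Parabolic subgroups\<close>

lemma parab_perm: "v \<in> parab J \<Longrightarrow> J \<subseteq> {1..<n} \<Longrightarrow> v permutes {1..n}"
  unfolding parab_def using wprod_permutes by blast

lemma parab_presv: "v \<in> parab J \<Longrightarrow> J \<subseteq> {1..<n} \<Longrightarrow> k \<notin> J \<Longrightarrow> presv v k"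
  unfolding parab_def
proof clarify
  fix ws assume "set ws \<subseteq> J" "J \<subseteq> {1..<n}" "k \<notin> J"
  then show "presv (wprod ws) k" by (intro word_presv[of ws J]) auto
qed

lemma parab_single:
  assumes "v \<in> parab {i}"
  shows "v = id \<or> v = sgen i"
proof -
  obtain ws where ws: "v = wprod ws" "set ws \<subseteq> {i}" using assms by (auto simp: parab_def)
  have "wprod ws = id \<or> wprod ws = sgen i" using ws(2)
  proof (induction ws)
    case Nil
    then show ?case by simp
  next
    case (Cons a ws)
    then have "a = i" by simp
    with Cons show ?case by (auto simp: sgen_sgen)
  qed
  then show ?thesis using ws(1) by simp
qed

lemma IR:
  assumes "w \<in> sym_group n" "bruhat_irreducible n w"
    and "x permutes {1..n}" "y permutes {1..n}" "w = x \<circ> y"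
    and "\<forall>k \<in> {1..<n}. presv x k \<or> presv y k"
    and "k1 \<in> {1..<n}" "presv x k1" "k2 \<in> {1..<n}" "presv y k2"
  shows False
proof -
  have pw: "w permutes {1..n}" using assms(1) by (simp add: sym_group_def)
  have Pw: "\<not> presv w k" if "k \<in> {1..<n}" for k
    using assms(2) supp_char[OF pw] that by (auto simp: bruhat_irreducible_def)
  have "y \<noteq> id" using assms(5,8,7) Pw by auto
  moreover have "x \<noteq> id" using assms(5,10,9) Pw by auto
  moreover have "supp n x \<inter> supp n y = {}"
    using supp_char[OF assms(3)] supp_char[OF assms(4)] assms(6) by auto
  moreover have "x \<in> sym_group n" "y \<in> sym_group n" using assms(3,4) by (auto simp: sym_group_def)
  ultimately show False using assms(2,5) unfolding bruhat_irreducible_def by blast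
qed

theorem proposition5p2:
  fixes n i :: nat and w :: "nat \<Rightarrow> nat" and J :: "nat set"
  assumes "w \<in> sym_group n"
    and "bruhat_irreducible n w"
    and "almost_reducible n w J i"
  shows "J = {1..i} \<or> J = {i..<n}"
proof -
  note wS = assms(1) and irr = assms(2)
  obtain u v where BP: "BP_decomp n J w u v" and suJ: "supp n u \<inter> J = {i}"
    and Jsub: "J \<subseteq> {1..<n}" and iDR: "i \<notin> DR n w"
    using assms(3) unfolding almost_reducible_def by blast
  have wuv: "w = u \<circ> v" and vP: "v \<in> parab J"
    and mini: "\<And>y. y \<in> parab J \<Longrightarrow> clen n u \<le> clen n (w \<circ> y)"
    and sDL: "supp n u \<inter> J \<subseteq> DL n v"
    using BP unfolding BP_decomp_def parabolic_decomp_def by auto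
  have iJ: "i \<in> J" using suJ by auto
  have iS: "1 \<le> i" "i < n" using iJ Jsub by auto
  have iS': "i \<in> {1..<n}" using iS by simp
  have pw: "w permutes {1..n}" using wS by (simp add: sym_group_def)
  have pv: "v permutes {1..n}" using vP Jsub by (rule parab_perm)
  obtain ws where ws: "v = wprod ws" "set ws \<subseteq> J" using vP by (auto simp: parab_def)
  have "w \<circ> wprod (rev ws) = u \<circ> (v \<circ> wprod (rev ws))" using wuv by (simp add: comp_assoc)
  also have "\<dots> = u" using wprod_rev[of ws] ws(1) by simp
  finally have uw: "u = w \<circ> wprod (rev ws)" by simp
  have pu: "u permutes {1..n}"
    unfolding uw using wprod_permutes[of "rev ws" n] ws(2) Jsub pw by (auto intro: permutes_compose)
  have Pw: "\<not> presv w k" if "k \<in> {1..<n}" for k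
    using irr supp_char[OF pw] that by (auto simp: bruhat_irreducible_def)
  have Pui: "\<not> presv u i" using suJ supp_char[OF pu] by auto
  have Pu: "presv u j" if "j \<in> J" "j \<noteq> i" for j
  proof -
    have "j \<notin> supp n u" using suJ that by auto
    then show ?thesis using supp_char[OF pu] that Jsub by auto
  qed
  have Pv: "presv v k" if "k \<notin> J" for k using parab_presv[OF vP Jsub that] .
  have F6: "u j < u (Suc j)" if "j \<in> J" for j
  proof (rule ccontr)
    assume "\<not> ?thesis"
    then have lt: "u (Suc j) < u j" using perm_neq[OF pu, of j] by simp
    have j: "1 \<le> j" "j < n" using that Jsub by auto
    have "wprod (rev ws @ [j]) \<in> parab J" unfolding parab_def
      using ws(2) that by (intro CollectI exI[of _ "rev ws @ [j]"]) auto
    then have "clen n u \<le> clen n (w \<circ> wprod (rev ws @ [j]))" by (rule mini)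
    also have "w \<circ> wprod (rev ws @ [j]) = u \<circ> sgen j" unfolding uw wprod_append1 by (simp add: comp_assoc)
    finally have "clen n u \<le> clen n (u \<circ> sgen j)" .
    moreover have "u \<circ> sgen j permutes {1..n}" using pu sgen_permutes[OF j] by (rule permutes_compose[rotated])
    ultimately have "ninv n u \<le> ninv n (u \<circ> sgen j)" using clen_eq pu by simp
    then show False using ninv_down[OF j lt] by simp
  qed
  have IRw: False if "x permutes {1..n}" "y permutes {1..n}" "w = x \<circ> y"
      "\<forall>k \<in> {1..<n}. presv x k \<or> presv y k"
      "k1 \<in> {1..<n}" "presv x k1" "k2 \<in> {1..<n}" "presv y k2" for x y k1 k2
    using IR[OF wS irr that] .
  have J1: False if "j \<in> J" "g \<notin> J" "j < g" "g < i" for j g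
  proof -
    have pg: "presv v g" using Pv that(2) .
    define vL where "vL = cutL g v"
    define vH where "vH = cutH g v"
    have pvL: "vL permutes {1..n}" and pvH: "vH permutes {1..n}"
      unfolding vL_def vH_def using cut_perm[OF pv pg] by auto
    have "v = vH \<circ> vL" unfolding vL_def vH_def using cut_decomp[OF pv pg] by simp
    then have wd: "w = (u \<circ> vH) \<circ> vL" using wuv by (simp add: comp_assoc)
    have j1: "j \<in> {1..<n}" using that(1) Jsub by auto
    show False
    proof (rule IRw[OF permutes_compose[OF pvH pu] pvL wd _ j1 _ iS'])
      show "\<forall>k\<in>{1..<n}. presv (u \<circ> vH) k \<or> presv vL k"
      proof
        fix k assume k: "k \<in> {1..<n}"
        show "presv (u \<circ> vH) k \<or> presv vL k"
        proof (cases "g \<le> k")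
          case True
          then show ?thesis unfolding vL_def using presv_cut(3)[OF pv pg] by simp
        next
          case False
          then have hk: "presv vH k" unfolding vH_def using presv_cut(2)[OF pv pg] by simp
          show ?thesis
          proof (cases "k \<in> J")
            case True
            then have "presv u k" using Pu False that by simp
            then show ?thesis using presv_comp hk by blast
          next
            case False
            then have "presv v k" using Pv by simp
            then show ?thesis unfolding vL_def using presv_cut(1)[OF pv pg] \<open>\<not> g \<le> k\<close> by simp
          qed
        qed
      qed
      show "presv (u \<circ> vH) j"
        using Pu[OF that(1)] that presv_cut(2)[OF pv pg, of j] presv_comp unfolding vH_def by simp
      show "presv vL i" unfolding vL_def using presv_cut(3)[OF pv pg] that by simp
    qed
  qed
  have J2: False if "j \<in> J" "g \<notin> J" "i < g" "g < j" for j g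
  proof -
    have pg: "presv v g" using Pv that(2) .
    define vL where "vL = cutL g v"
    define vH where "vH = cutH g v"
    have pvL: "vL permutes {1..n}" and pvH: "vH permutes {1..n}"
      unfolding vL_def vH_def using cut_perm[OF pv pg] by auto
    have "v = vL \<circ> vH" unfolding vL_def vH_def using cut_decomp[OF pv pg] by simp
    then have wd: "w = (u \<circ> vL) \<circ> vH" using wuv by (simp add: comp_assoc)
    have j1: "j \<in> {1..<n}" using that(1) Jsub by auto
    show False
    proof (rule IRw[OF permutes_compose[OF pvL pu] pvH wd _ j1 _ iS'])
      show "\<forall>k\<in>{1..<n}. presv (u \<circ> vL) k \<or> presv vH k"
      proof
        fix k assume k: "k \<in> {1..<n}"
        show "presv (u \<circ> vL) k \<or> presv vH k"
        proof (cases "k \<le> g")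
          case True
          then show ?thesis unfolding vH_def using presv_cut(2)[OF pv pg] by simp
        next
          case False
          then have hk: "presv vL k" unfolding vL_def using presv_cut(3)[OF pv pg] by simp
          show ?thesis
          proof (cases "k \<in> J")
            case True
            then have "presv u k" using Pu False that by simp
            then show ?thesis using presv_comp hk by blast
          next
            case False
            then have "presv v k" using Pv by simp
            then show ?thesis unfolding vH_def using presv_cut(4)[OF pv pg] \<open>\<not> k \<le> g\<close> by simp
          qed
        qed
      qed
      show "presv (u \<circ> vL) j"
        using Pu[OF that(1)] that presv_cut(3)[OF pv pg, of j] presv_comp unfolding vL_def by simp
      show "presv vH i" unfolding vH_def using presv_cut(2)[OF pv pg] that by simp
    qed
  qed
  have mid: False if "Suc i \<in> J" "i = 1 \<or> i - 1 \<in> J"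
  proof -
    have p1: "presv u (i - 1)"
    proof (cases "i = 1")
      case True
      then show ?thesis by simp
    next
      case False
      then have "i - 1 \<in> J" using that by simp
      moreover have "i - 1 \<noteq> i" using iS by simp
      ultimately show ?thesis using Pu by blast
    qed
    have p2: "presv u (Suc i)" using Pu that(1) by simp
    have lt: "u i < u (Suc i)" using F6 iJ by simp
    have a1: "u i \<le> i - 1 \<longleftrightarrow> i \<le> i - 1" using presv_le[OF pu p1] .
    have a2: "u (Suc i) \<le> Suc i" using presv_le[OF pu p2] by simp
    have ui: "u i = i" using a1 a2 lt iS by linarith
    have "{1..i} = {1..i - 1} \<union> {i}" using iS by auto
    then have "u ` {1..i} = u ` {1..i - 1} \<union> {u i}" by simp
    also have "\<dots> = {1..i - 1} \<union> {i}" using p1 ui by (simp add: presv_def)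
    also have "\<dots> = {1..i}" using iS by auto
    finally show False using Pui by (simp add: presv_def)
  qed
  have maxJ: False if "b \<in> J" "i < b" "\<forall>k\<in>J. k \<le> b" "Suc b < n" for b
  proof -
    have pb: "presv u b" using Pu that by simp
    define uL where "uL = cutL b u"
    define uH where "uH = cutH b u"
    have puL: "uL permutes {1..n}" and puH: "uH permutes {1..n}"
      unfolding uL_def uH_def using cut_perm[OF pu pb] by auto
    have "u = uH \<circ> uL" unfolding uL_def uH_def using cut_decomp[OF pu pb] by simp
    then have wd: "w = uH \<circ> (uL \<circ> v)" using wuv by (simp add: comp_assoc)
    have sb: "Suc b \<in> {1..<n}" using that by simp
    have sbJ: "Suc b \<notin> J" using that(3) by auto
    show False
    proof (rule IRw[OF puH permutes_compose[OF pv puL] wd _ iS' _ sb])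
      show "\<forall>k\<in>{1..<n}. presv uH k \<or> presv (uL \<circ> v) k"
      proof
        fix k assume k: "k \<in> {1..<n}"
        show "presv uH k \<or> presv (uL \<circ> v) k"
        proof (cases "k \<le> b")
          case True
          then show ?thesis unfolding uH_def using presv_cut(2)[OF pu pb] by simp
        next
          case False
          then have "k \<notin> J" using that(3) by auto
          then have "presv v k" using Pv by simp
          moreover have "presv uL k" unfolding uL_def using presv_cut(3)[OF pu pb] False by simp
          ultimately show ?thesis using presv_comp by blast
        qed
      qed
      show "presv uH i" unfolding uH_def using presv_cut(2)[OF pu pb] that by simp
      have "presv uL (Suc b)" unfolding uL_def using presv_cut(3)[OF pu pb] by simp
      then show "presv (uL \<circ> v) (Suc b)" using Pv[OF sbJ] presv_comp by blast
    qed
  qed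
  have minJ: False if "a \<in> J" "a < i" "\<forall>k\<in>J. a \<le> k" "2 \<le> a" for a
  proof -
    have pa: "presv u a" using Pu that by simp
    define uL where "uL = cutL a u"
    define uH where "uH = cutH a u"
    have puL: "uL permutes {1..n}" and puH: "uH permutes {1..n}"
      unfolding uL_def uH_def using cut_perm[OF pu pa] by auto
    have "u = uL \<circ> uH" unfolding uL_def uH_def using cut_decomp[OF pu pa] by simp
    then have wd: "w = uL \<circ> (uH \<circ> v)" using wuv by (simp add: comp_assoc)
    have one: "(1::nat) \<in> {1..<n}" using iS by simp
    have oneJ: "1 \<notin> J" using that by auto
    show False
    proof (rule IRw[OF puL permutes_compose[OF pv puH] wd _ iS' _ one])
      show "\<forall>k\<in>{1..<n}. presv uL k \<or> presv (uH \<circ> v) k"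
      proof
        fix k assume k: "k \<in> {1..<n}"
        show "presv uL k \<or> presv (uH \<circ> v) k"
        proof (cases "a \<le> k")
          case True
          then show ?thesis unfolding uL_def using presv_cut(3)[OF pu pa] by simp
        next
          case False
          then have "k \<notin> J" using that(3) by auto
          then have "presv v k" using Pv by simp
          moreover have "presv uH k" unfolding uH_def using presv_cut(2)[OF pu pa] False by simp
          ultimately show ?thesis using presv_comp by blast
        qed
      qed
      show "presv uL i" unfolding uL_def using presv_cut(3)[OF pu pa] that by simp
      have "presv uH 1" unfolding uH_def using presv_cut(2)[OF pu pa] that by simp
      then show "presv (uH \<circ> v) 1" using Pv[OF oneJ] presv_comp by blast
    qed
  qed
  have single: False if "J = {i}"
  proof -
    have disj: "v = id \<or> v = sgen i" using parab_single vP that by simp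
    have "i \<in> DL n v" using sDL suJ by auto
    then have c: "clen n (sgen i \<circ> v) < clen n v" by (simp add: DL_def)
    have "ninv n id = 0" using ninv_id by (simp add: id_def)
    then have "v \<noteq> id" using c clen_eq[OF permutes_id, of n] by auto
    then have vs: "v = sgen i" using disj by simp
    have lt: "u i < u (Suc i)" using F6 iJ by simp
    have pus: "u \<circ> sgen i permutes {1..n}" using pu sgen_permutes[OF iS] by (rule permutes_compose[rotated])
    have "clen n w = Suc (clen n u)"
      using wuv vs clen_eq[OF pus] clen_eq[OF pu] ninv_up[OF iS lt] by simp
    moreover have "w \<circ> sgen i = u" using wuv vs by (simp add: comp_assoc sgen_sgen)
    ultimately have "i \<in> DR n w" using iS by (simp add: DR_def)
    then show False using iDR by simp
  qed
  have finJ: "finite J" using Jsub finite_subset by blast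
  show ?thesis
  proof (cases "Suc i \<in> J")
    case True
    have i2: "i \<noteq> 1" "i - 1 \<notin> J" using mid True by auto
    have low: "i \<le> j" if "j \<in> J" for j
    proof (rule ccontr)
      assume "\<not> i \<le> j"
      moreover have "j \<noteq> i - 1" using i2 that by auto
      ultimately have "j < i - 1" by linarith
      then show False using J1[OF that i2(2)] iS by simp
    qed
    define b where "b = Max J"
    have Jne: "J \<noteq> {}" using iJ by auto
    have bJ: "b \<in> J" using Max_in[OF finJ Jne] by (simp add: b_def)
    have bmax: "\<forall>k\<in>J. k \<le> b" using Max_ge[OF finJ] by (simp add: b_def)
    have ib: "i < b" using bmax True by fastforce
    have bn: "b < n" using bJ Jsub by auto
    have "\<not> Suc b < n" using maxJ[OF bJ ib bmax] by blast
    then have bn1: "b = n - 1" using bn by simp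
    have "J = {i..<n}"
    proof
      show "J \<subseteq> {i..<n}" using low Jsub by auto
      show "{i..<n} \<subseteq> J"
      proof
        fix k assume k: "k \<in> {i..<n}"
        show "k \<in> J"
        proof (rule ccontr)
          assume "k \<notin> J"
          moreover have "i < k" using k iJ \<open>k \<notin> J\<close> by (cases "k = i") auto
          moreover have "k < b" using k bJ bn1 \<open>k \<notin> J\<close> by (cases "k = b") auto
          ultimately show False using J2[OF bJ] by blast
        qed
      qed
    qed
    then show ?thesis by simp
  next
    case False
    have high: "j \<le> i" if "j \<in> J" for j
    proof (rule ccontr)
      assume "\<not> j \<le> i"
      moreover have "j \<noteq> Suc i" using False that by auto
      ultimately show False using J2[OF that False] by simp
    qed
    show ?thesis
    proof (cases "2 \<le> i \<and> i - 1 \<in> J")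
      case True
      define a where "a = Min J"
      have Jne: "J \<noteq> {}" using iJ by auto
      have aJ: "a \<in> J" using Min_in[OF finJ Jne] by (simp add: a_def)
      have amin: "\<forall>k\<in>J. a \<le> k" using Min_le[OF finJ] by (simp add: a_def)
      have ai: "a < i" using amin True by fastforce
      have a1: "1 \<le> a" using aJ Jsub by auto
      have "\<not> 2 \<le> a" using minJ[OF aJ ai amin] by blast
      then have a1': "a = 1" using a1 by simp
      have "J = {1..i}"
      proof
        show "J \<subseteq> {1..i}" using high Jsub by auto
        show "{1..i} \<subseteq> J"
        proof
          fix k assume k: "k \<in> {1..i}"
          show "k \<in> J"
          proof (rule ccontr)
            assume "k \<notin> J"
            moreover have "k < i" using k iJ \<open>k \<notin> J\<close> by (cases "k = i") auto
            moreover have "a < k" using k aJ a1' \<open>k \<notin> J\<close> by (cases "k = 1") auto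
            ultimately show False using J1[OF aJ] by blast
          qed
        qed
      qed
      then show ?thesis by simp
    next
      case False
      have "J = {i}"
      proof
        show "{i} \<subseteq> J" using iJ by simp
        show "J \<subseteq> {i}"
        proof
          fix j assume j: "j \<in> J"
          show "j \<in> {i}"
          proof (rule ccontr)
            assume "j \<notin> {i}"
            then have ji: "j < i" using high[OF j] by simp
            then have "2 \<le> i" using j Jsub by auto
            then have "i - 1 \<notin> J" using False by simp
            moreover have "j \<noteq> i - 1" using j calculation by auto
            ultimately have "i - 1 \<notin> J" "j < i - 1" "i - 1 < i" using ji by auto
            then show False using J1[OF j] by blast
          qed
        qed
      qed
      then show ?thesis using single by blast
    qed
  qed
qed

end
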